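(* Under the standing assumptions below, if $F\in\mathcal N$ satisfies $\mathcal B(F)=F$, then $F(\gamma,x,s)\le D(\gamma,x,s)$ for all $\gamma\in\mathbb R^I_+$, $x\in\mathcal X$, $s\in\mathcal S$.
   Context: Setup. Let $\mathcal S$ be a finite set and $(s_t)_{t\ge0}$ a Markov chain on $\mathcal S$ with transition probabilities $\pi(s'|s)>0$ for all $s,s'\in\mathcal S$; for $s^t=(s_0,\dots,s_t)\in\mathcal S^{t+1}$ write $\pi^t(s^t|s_0)$ for its probability given $s_0$ and $\mathbb E_{s_t}$ for expectation over future shocks given $s^t$. Let $\mathcal A\subset\mathbb R^n$ be a finite set, $\mathcal X\subseteq\mathbb R^m$ a countable set, $\zeta:\mathcal X\times\mathcal A\times\mathcal S\to\mathcal X$, $p:\mathcal X\times\mathcal A\times\mathcal S\to\mathbb R$, $r,g^1,\dots,g^I$ bounded real functions on $\mathcal X\times\mathcal A\times\mathcal S$, $\bar g^i\in\mathbb R$, $\beta\in(0,1)$. A plan is $a=(a(s^t))_{t,s^t}$, $a(s^t)\in\mathcal A$, inducing $x(s^0)=x_0$, $x(s^{t+1})=\zeta(x(s^t),a(s^t),s_t)$. $\tilde{\mathcal A}(x,s)=\{a\in\mathcal A:p(x,a,s)\ge0\}$; $\tilde{\mathcal A}^\infty(x_0)$ is the set of plans with $a(s^t)\in\tilde{\mathcal A}(x(s^t),s_t)$ for all $t,s^t$. A plan is feasible for $(x_0,s_0)$ if it lies in $\tilde{\mathcal A}^\infty(x_0)$ and $\mathbb E_{s_t}\sum_{n\ge0}\beta^ng^i(x(s^{t+n}),a(s^{t+n}),s_{t+n})\ge\bar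 g^i$ for all $t,s^t,i$. Standing assumption: for every $(x_0,s_0)$ a feasible plan exists. Pre-action histories $h^t=(s_0,a_0,\dots,s_{t-1},a_{t-1},s_t)\in\mathcal H^t=\mathcal S^{t+1}\times\mathcal A^t$; a plan generates $h^t=(s_0,a(s^0),\dots,a(s^{t-1}),s_t)$ along $s^t$. Dual value: $\Lambda$ is the set of $(\lambda^i(h^t))_{t,h^t,i}$, $\lambda^i(h^t)\ge0$, $\sum_t\sum_{h^t}\sum_i\beta^t\lambda^i(h^t)\pi^t(s^t|s_0)<\infty$. $L(a,\lambda;\gamma,x_0,s_0)=\mathbb E_{s_0}\sum_t\beta^t\big[r(x(s^t),a(s^t),s_t)+\sum_i\gamma^ig^i(x(s^t),a(s^t),s_t)+\sum_i\lambda^i(h^t)(\sum_{n\ge0}\beta^ng^i(x(s^{t+n}),a(s^{t+n}),s_{t+n})-\bar g^i)\big]$ and $D(\gamma,x_0,s_0)=\inf_{\lambda\in\Lambda}\sup_{a\in\tilde{\mathcal A}^\infty(x_0)}L$. Function spaces. $L=(\|r\|_\infty+\sum_i\|g^i\|_\infty)/(1-\beta)$ (a constant, not to be confused with the Lagrangian), $B(k)=\{\gamma\in\mathbb R^I_+:\|\gamma\|_\infty\le k\}$, $\mathcal S=\{s_1,\dots,s_{|\mathcal S|}\}$, $\mathcal X=\{x_1,x_2,\dots\}$. $\mathcal M$: functions $F:\mathbb R^I_+\times\mathcal X\times\mathcal S\to\mathbb R$ with $F(\cdot,x,s)\in L^\infty(B(k))$ for all $k$ and $\|F\|_{\mathcal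 M}=\sum_i2^{-i}\sum_j2^{-j}\sum_{k\ge1}2^{-k}\|F(\cdot,x_j,s_i)\|_{L^\infty(B(k))}<\infty$. $\mathcal N$: those $F\in\mathcal M$ with, for all $x,s$, (i) $F(\cdot,x,s)$ convex; (ii) $|F(\gamma_1,x,s)-F(\gamma_2,x,s)|\le L\|\gamma_1-\gamma_2\|_1$; (iii) $F(\gamma,x,s)\ge v^0+\sum_i\gamma^iv^i$ for every feasible plan for $(x,s)$, $v^0=\mathbb E_s\sum_t\beta^tr(\cdot)$, $v^i=\mathbb E_s\sum_t\beta^tg^i(\cdot)$; (iv) $F(\gamma,x,s)\le(1+\sum_i\gamma^i)L$. Bellman operator: $\mathcal B(F)(\gamma,x,s)=\inf_{\lambda\in\mathbb R^I_+}\sup_{a\in\tilde{\mathcal A}(x,s)}\big[r(x,a,s)+\sum_i(\gamma^ig^i(x,a,s)+\lambda^i(g^i(x,a,s)-\bar g^i))+\beta\mathbb E_sF(\gamma+\lambda,\zeta(x,a,s),s')\big]$, $s'\sim\pi(\cdot|s)$. *)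

theory Defs
  imports "HOL-Analysis.Analysis" "HOL-Probability.Essential_Supremum" "HOL-Library.Countable"
begin

text \<open>States: a finite type 's; actions: a finite type 'a (the finite set A);
  endogenous states: a countable type 'x (the countable set X); constraint indices: a finite
  type 'i (so I = CARD('i)); multipliers gamma, lambda: vectors real^'i.
  Transition probability pi(s'|s) is written  P s s'.
  A shock history s^t = (s_0,...,s_t) is represented as the list [s_t, ..., s_0]
  (newest first, nonempty); its current shock is  hd h  and its initial shock  last h.\<close>

fun xp :: "('x \<Rightarrow> 'a \<Rightarrow> 's \<Rightarrow> 'x) \<Rightarrow> ('s list \<Rightarrow> 'a) \<Rightarrow> 'x \<Rightarrow> 's list \<Rightarrow> 'x" where
  "xp \<zeta> a x0 [] = x0"
| "xp \<zeta> a x0 [s] = x0"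
| "xp \<zeta> a x0 (s' # s # h) = \<zeta> (xp \<zeta> a x0 (s # h)) (a (s # h)) s"

(* conditional probability of the extension e (newest first) of history h *)
fun cp :: "('s \<Rightarrow> 's \<Rightarrow> real) \<Rightarrow> 's list \<Rightarrow> 's list \<Rightarrow> real" where
  "cp P [] h = 1"
| "cp P (s' # e) h = P (hd (e @ h)) s' * cp P e h"

(* pre-action history h^t generated by plan a along shock history h:
   the list of past (s_k, a(s^k)) pairs, newest first; the current shock is hd h *)
fun genh :: "('s list \<Rightarrow> 'a) \<Rightarrow> 's list \<Rightarrow> ('s \<times> 'a) list" where
  "genh a [] = []"
| "genh a [s] = []"
| "genh a (s' # s # h) = (s, a (s # h)) # genh a (s # h)"

definition cont :: "real \<Rightarrow> ('s::finite \<Rightarrow> 's \<Rightarrow> real) \<Rightarrow> ('x \<Rightarrow> 'a \<Rightarrow> 's \<Rightarrow> 'x)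
    \<Rightarrow> ('s list \<Rightarrow> 'a) \<Rightarrow> 'x \<Rightarrow> ('x \<Rightarrow> 'a \<Rightarrow> 's \<Rightarrow> real) \<Rightarrow> 's list \<Rightarrow> real" where
  "cont \<beta> P \<zeta> a x0 f h =
     (\<Sum>n. \<beta> ^ n * (\<Sum>e\<in>{e::'s list. length e = n}.
        cp P e h * f (xp \<zeta> a x0 (e @ h)) (a (e @ h)) (hd (e @ h))))"

definition Aadm :: "('x \<Rightarrow> 'a \<Rightarrow> 's \<Rightarrow> real) \<Rightarrow> 'x \<Rightarrow> 's \<Rightarrow> 'a set" where
  "Aadm p x s = {u. 0 \<le> p x u s}"

definition Ainf :: "('x \<Rightarrow> 'a \<Rightarrow> 's \<Rightarrow> real) \<Rightarrow> ('x \<Rightarrow> 'a \<Rightarrow> 's \<Rightarrow> 'x) \<Rightarrow> 'x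
    \<Rightarrow> ('s list \<Rightarrow> 'a) set" where
  "Ainf p \<zeta> x0 = {a. \<forall>h. h \<noteq> [] \<longrightarrow> a h \<in> Aadm p (xp \<zeta> a x0 h) (hd h)}"

definition feasible :: "real \<Rightarrow> ('s::finite \<Rightarrow> 's \<Rightarrow> real) \<Rightarrow> ('x \<Rightarrow> 'a \<Rightarrow> 's \<Rightarrow> 'x)
    \<Rightarrow> ('x \<Rightarrow> 'a \<Rightarrow> 's \<Rightarrow> real) \<Rightarrow> ('i \<Rightarrow> 'x \<Rightarrow> 'a \<Rightarrow> 's \<Rightarrow> real) \<Rightarrow> ('i \<Rightarrow> real)
    \<Rightarrow> ('s list \<Rightarrow> 'a) \<Rightarrow> 'x \<Rightarrow> 's \<Rightarrow> bool" where
  "feasible \<beta> P \<zeta> p g gbar a x0 s0 \<longleftrightarrow>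
     a \<in> Ainf p \<zeta> x0 \<and>
     (\<forall>h i. h \<noteq> [] \<and> last h = s0 \<longrightarrow> gbar i \<le> cont \<beta> P \<zeta> a x0 (g i) h)"

definition lagr :: "real \<Rightarrow> ('s::finite \<Rightarrow> 's \<Rightarrow> real) \<Rightarrow> ('x \<Rightarrow> 'a \<Rightarrow> 's \<Rightarrow> 'x)
    \<Rightarrow> ('x \<Rightarrow> 'a \<Rightarrow> 's \<Rightarrow> real) \<Rightarrow> ('i::finite \<Rightarrow> 'x \<Rightarrow> 'a \<Rightarrow> 's \<Rightarrow> real) \<Rightarrow> ('i \<Rightarrow> real)
    \<Rightarrow> ('s list \<Rightarrow> 'a) \<Rightarrow> (('s \<times> 'a) list \<Rightarrow> 's \<Rightarrow> 'i \<Rightarrow> real) \<Rightarrow> real^'i \<Rightarrow> 'x \<Rightarrow> 's \<Rightarrow> real" where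
  "lagr \<beta> P \<zeta> r g gbar a lam \<gamma> x0 s0 =
     (\<Sum>t. \<beta> ^ t * (\<Sum>e\<in>{e::'s list. length e = t}. cp P e [s0] *
        (let h = e @ [s0]; x = xp \<zeta> a x0 h; u = a h; s = hd h in
          r x u s + (\<Sum>i\<in>UNIV. \<gamma>$i * g i x u s)
          + (\<Sum>i\<in>UNIV. lam (genh a h) s i * (cont \<beta> P \<zeta> a x0 (g i) h - gbar i)))))"

(* the multiplier set Lambda (for initial shock s0); a pre-action history
   h^t = (s_0,a_0,...,s_{t-1},a_{t-1},s_t) is the pair (past pairs newest first, s_t) *)
definition LamSet :: "real \<Rightarrow> ('s::finite \<Rightarrow> 's \<Rightarrow> real) \<Rightarrow> 's
    \<Rightarrow> (('s \<times> 'a::finite) list \<Rightarrow> 's \<Rightarrow> 'i::finite \<Rightarrow> real) set" where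
  "LamSet \<beta> P s0 = {lam. (\<forall>hh s i. 0 \<le> lam hh s i) \<and>
     summable (\<lambda>t. \<Sum>e\<in>{e::'s list. length e = t}. \<Sum>acts\<in>{acts::'a list. length acts = t}.
        \<Sum>i\<in>UNIV. \<beta> ^ t * lam (zip (tl (e @ [s0])) acts) (hd (e @ [s0])) i * cp P e [s0])}"

definition Dval :: "real \<Rightarrow> ('s::finite \<Rightarrow> 's \<Rightarrow> real) \<Rightarrow> ('x \<Rightarrow> 'a::finite \<Rightarrow> 's \<Rightarrow> 'x)
    \<Rightarrow> ('x \<Rightarrow> 'a \<Rightarrow> 's \<Rightarrow> real) \<Rightarrow> ('x \<Rightarrow> 'a \<Rightarrow> 's \<Rightarrow> real)
    \<Rightarrow> ('i::finite \<Rightarrow> 'x \<Rightarrow> 'a \<Rightarrow> 's \<Rightarrow> real) \<Rightarrow> ('i \<Rightarrow> real)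
    \<Rightarrow> real^'i \<Rightarrow> 'x \<Rightarrow> 's \<Rightarrow> ereal" where
  "Dval \<beta> P \<zeta> p r g gbar \<gamma> x0 s0 =
     (INF lam\<in>LamSet \<beta> P s0. SUP a\<in>Ainf p \<zeta> x0. ereal (lagr \<beta> P \<zeta> r g gbar a lam \<gamma> x0 s0))"

definition orthant :: "(real^'i) set" where
  "orthant = {\<gamma>. \<forall>i. 0 \<le> \<gamma>$i}"

definition Bk :: "real \<Rightarrow> (real^'i) set" where
  "Bk k = {\<gamma>. \<forall>i. 0 \<le> \<gamma>$i \<and> \<gamma>$i \<le> k}"

definition bellman :: "real \<Rightarrow> ('s::finite \<Rightarrow> 's \<Rightarrow> real) \<Rightarrow> ('x \<Rightarrow> 'a \<Rightarrow> 's \<Rightarrow> 'x)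
    \<Rightarrow> ('x \<Rightarrow> 'a \<Rightarrow> 's \<Rightarrow> real) \<Rightarrow> ('x \<Rightarrow> 'a \<Rightarrow> 's \<Rightarrow> real)
    \<Rightarrow> ('i::finite \<Rightarrow> 'x \<Rightarrow> 'a \<Rightarrow> 's \<Rightarrow> real) \<Rightarrow> ('i \<Rightarrow> real)
    \<Rightarrow> (real^'i \<Rightarrow> 'x \<Rightarrow> 's \<Rightarrow> real) \<Rightarrow> real^'i \<Rightarrow> 'x \<Rightarrow> 's \<Rightarrow> ereal" where
  "bellman \<beta> P \<zeta> p r g gbar F \<gamma> x s =
     (INF lam\<in>orthant. SUP u\<in>Aadm p x s.
        ereal (r x u s + (\<Sum>i\<in>UNIV. \<gamma>$i * g i x u s + lam$i * (g i x u s - gbar i))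
               + \<beta> * (\<Sum>s'\<in>UNIV. P s s' * F (\<gamma> + lam) (\<zeta> x u s) s')))"

definition supn :: "('x \<Rightarrow> 'a \<Rightarrow> 's \<Rightarrow> real) \<Rightarrow> real" where
  "supn f = (SUP z\<in>UNIV. \<bar>f (fst z) (fst (snd z)) (snd (snd z))\<bar>)"

definition Lconst :: "real \<Rightarrow> ('x \<Rightarrow> 'a \<Rightarrow> 's \<Rightarrow> real) \<Rightarrow> ('i::finite \<Rightarrow> 'x \<Rightarrow> 'a \<Rightarrow> 's \<Rightarrow> real) \<Rightarrow> real" where
  "Lconst \<beta> r g = (supn r + (\<Sum>i\<in>UNIV. supn (g i))) / (1 - \<beta>)"

definition linf :: "(real^'i::finite \<Rightarrow> real) \<Rightarrow> real \<Rightarrow> ereal" where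
  "linf f k = esssup (restrict_space lborel (Bk k)) (\<lambda>\<gamma>. ereal \<bar>f \<gamma>\<bar>)"

(* ||F||_M, enumerations s_i, x_j given by to_nat (index to_nat + 1) *)
definition normM :: "(real^'i::finite \<Rightarrow> 'x::countable \<Rightarrow> 's::finite \<Rightarrow> real) \<Rightarrow> ennreal" where
  "normM F = (\<Sum>\<^sub>\<infinity>s\<in>UNIV. ennreal ((1/2) ^ (to_nat s + 1)) *
              (\<Sum>\<^sub>\<infinity>x\<in>UNIV. ennreal ((1/2) ^ (to_nat x + 1)) *
                (\<Sum>k. ennreal ((1/2) ^ (k + 1)) * e2ennreal (linf (\<lambda>\<gamma>. F \<gamma> x s) (real (k + 1))))))"

definition inM :: "(real^'i::finite \<Rightarrow> 'x::countable \<Rightarrow> 's::finite \<Rightarrow> real) \<Rightarrow> bool" where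
  "inM F \<longleftrightarrow>
     (\<forall>x s (k::nat). (\<lambda>\<gamma>. F \<gamma> x s) \<in> borel_measurable (restrict_space lborel (Bk (real k)))
        \<and> linf (\<lambda>\<gamma>. F \<gamma> x s) (real k) < \<infinity>) \<and> normM F < \<infinity>"

definition inN :: "real \<Rightarrow> ('s::finite \<Rightarrow> 's \<Rightarrow> real) \<Rightarrow> ('x::countable \<Rightarrow> 'a \<Rightarrow> 's \<Rightarrow> 'x)
    \<Rightarrow> ('x \<Rightarrow> 'a \<Rightarrow> 's \<Rightarrow> real) \<Rightarrow> ('x \<Rightarrow> 'a \<Rightarrow> 's \<Rightarrow> real)
    \<Rightarrow> ('i::finite \<Rightarrow> 'x \<Rightarrow> 'a \<Rightarrow> 's \<Rightarrow> real) \<Rightarrow> ('i \<Rightarrow> real)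
    \<Rightarrow> (real^'i \<Rightarrow> 'x \<Rightarrow> 's \<Rightarrow> real) \<Rightarrow> bool" where
  "inN \<beta> P \<zeta> p r g gbar F \<longleftrightarrow> inM F \<and>
     (\<forall>x s.
        convex_on orthant (\<lambda>\<gamma>. F \<gamma> x s)
      \<and> (\<forall>\<gamma>1\<in>orthant. \<forall>\<gamma>2\<in>orthant.
           \<bar>F \<gamma>1 x s - F \<gamma>2 x s\<bar> \<le> Lconst \<beta> r g * (\<Sum>i\<in>UNIV. \<bar>\<gamma>1$i - \<gamma>2$i\<bar>))
      \<and> (\<forall>a. feasible \<beta> P \<zeta> p g gbar a x s \<longrightarrow>
           (\<forall>\<gamma>\<in>orthant. cont \<beta> P \<zeta> a x r [s] + (\<Sum>i\<in>UNIV. \<gamma>$i * cont \<beta> P \<zeta> a x (g i) [s])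
                          \<le> F \<gamma> x s))
      \<and> (\<forall>\<gamma>\<in>orthant. F \<gamma> x s \<le> (1 + (\<Sum>i\<in>UNIV. \<gamma>$i)) * Lconst \<beta> r g))"

end

theory Submission
  imports Defs
begin


lemma fin_len: "finite {e::'s::finite list. length e = n}"
  using finite_lists_length_eq[of "UNIV::'s set" n] by simp

lemma sum_len_Suc:
  "(\<Sum>e\<in>{e::'s::finite list. length e = Suc n}. f e) = (\<Sum>s'\<in>UNIV. \<Sum>e\<in>{e. length e = n}. f (s'#e))"
proof -
  have eq: "{e::'s list. length e = Suc n} = (\<lambda>(s,e). s#e) ` (UNIV \<times> {e. length e = n})"
    by (auto simp: length_Suc_conv image_iff)
  have inj: "inj_on (\<lambda>(s,e). s#e) (UNIV \<times> {e::'s list. length e = n})"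
    by (auto simp: inj_on_def)
  show ?thesis unfolding eq sum.reindex[OF inj]
    by (auto simp: sum.cartesian_product intro!: sum.cong)
qed

definition Exh :: "('s::finite \<Rightarrow> 's \<Rightarrow> real) \<Rightarrow> nat \<Rightarrow> 's list \<Rightarrow> ('s list \<Rightarrow> real) \<Rightarrow> real" where
  "Exh P n h f = (\<Sum>e\<in>{e::'s list. length e = n}. cp P e h * f (e @ h))"

lemma Exh_0[simp]: "Exh P 0 h f = f h"
  by (simp add: Exh_def)

lemma Exh_Suc_top:
  "Exh P (Suc n) h f = Exh P n h (\<lambda>h'. \<Sum>s'\<in>UNIV. P (hd h') s' * f (s'#h'))"
  unfolding Exh_def sum_len_Suc
  by (subst sum.swap) (simp add: sum_distrib_left sum_distrib_right mult_ac)

lemma Exh_Suc_bot: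
  "Exh P (Suc n) h f = (\<Sum>s'\<in>UNIV. P (hd h) s' * Exh P n (s'#h) f)"
proof (induction n arbitrary: h f)
  case 0
  then show ?case by (simp add: Exh_Suc_top)
next
  case (Suc n)
  have "Exh P (Suc (Suc n)) h f = Exh P (Suc n) h (\<lambda>h'. \<Sum>s'\<in>UNIV. P (hd h') s' * f (s'#h'))"
    by (rule Exh_Suc_top)
  also have "\<dots> = (\<Sum>s'\<in>UNIV. P (hd h) s' * Exh P n (s'#h) (\<lambda>h'. \<Sum>s'\<in>UNIV. P (hd h') s' * f (s'#h')))"
    by (rule Suc.IH)
  also have "\<dots> = (\<Sum>s'\<in>UNIV. P (hd h) s' * Exh P (Suc n) (s'#h) f)"
    by (simp only: Exh_Suc_top)
  finally show ?case .
qed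

lemma cp_nonneg: "(\<And>s s'. 0 \<le> P s s') \<Longrightarrow> 0 \<le> cp P e h"
  by (induction e) auto

lemma Exh_cong: "(\<And>e. length e = n \<Longrightarrow> f (e @ h) = g (e @ h)) \<Longrightarrow> Exh P n h f = Exh P n h g"
  unfolding Exh_def by (rule sum.cong) auto

lemma Exh_mono: "(\<And>s s'. 0 \<le> P s s') \<Longrightarrow> (\<And>e. length e = n \<Longrightarrow> f (e @ h) \<le> g (e @ h))
   \<Longrightarrow> Exh P n h f \<le> Exh P n h g"
  unfolding Exh_def by (rule sum_mono) (auto intro!: mult_left_mono cp_nonneg)

lemma Exh_add: "Exh P n h (\<lambda>h'. f h' + g h') = Exh P n h f + Exh P n h g"
  unfolding Exh_def by (simp add: algebra_simps sum.distrib)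

lemma Exh_diff: "Exh P n h (\<lambda>h'. f h' - g h') = Exh P n h f - Exh P n h g"
  unfolding Exh_def by (simp add: algebra_simps sum_subtractf)

lemma Exh_cmult: "Exh P n h (\<lambda>h'. c * f h') = c * Exh P n h f"
  unfolding Exh_def by (simp add: sum_distrib_left mult_ac)

lemma Exh_sum: "finite I \<Longrightarrow> Exh P n h (\<lambda>h'. \<Sum>i\<in>I. f i h') = (\<Sum>i\<in>I. Exh P n h (f i))"
  unfolding Exh_def by (simp add: sum_distrib_left sum.swap[of _ I])

lemma Exh_const: "(\<And>s. (\<Sum>s'\<in>UNIV. P s s') = 1) \<Longrightarrow> Exh P n h (\<lambda>_. c) = c"
proof (induction n arbitrary: h)
  case 0 then show ?case by simp
next
  case (Suc n)
  have "Exh P (Suc n) h (\<lambda>_. c) = (\<Sum>s'\<in>UNIV. P (hd h) s' * c)"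
    by (simp add: Exh_Suc_bot Suc)
  also have "\<dots> = c" using Suc.prems by (simp add: sum_distrib_right[symmetric])
  finally show ?case .
qed

lemma Exh_abs:
  assumes P1: "\<And>s s'. 0 \<le> P s s'" and P2: "\<And>s. (\<Sum>s'\<in>UNIV. P s s') = 1"
    and b: "\<And>h'. \<bar>f h'\<bar> \<le> B"
  shows "\<bar>Exh P n h f\<bar> \<le> B"
proof -
  have "Exh P n h f \<le> Exh P n h (\<lambda>_. B)"
    by (rule Exh_mono[OF P1]) (use b abs_le_D1 in blast)
  moreover have "Exh P n h (\<lambda>_. - B) \<le> Exh P n h f"
    by (rule Exh_mono[OF P1]) (use b in \<open>metis abs_le_D2 minus_le_iff\<close>)
  ultimately show ?thesis using Exh_const[OF P2] by (simp add: abs_le_iff)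
qed

lemma cont_Exh: "cont \<beta> P \<zeta> a x0 f h = (\<Sum>n. \<beta>^n * Exh P n h (\<lambda>h'. f (xp \<zeta> a x0 h') (a h') (hd h')))"
  unfolding cont_def Exh_def by simp

lemma abs_geo_bound: "\<bar>x\<bar> \<le> B \<Longrightarrow> 0 \<le> (\<beta>::real) \<Longrightarrow> \<bar>\<beta>^n * x\<bar> \<le> B * \<beta>^n"
proof -
  assume a: "\<bar>x\<bar> \<le> B" "0 \<le> \<beta>"
  have "\<bar>\<beta>^n * x\<bar> = \<beta>^n * \<bar>x\<bar>" using a by (simp add: abs_mult)
  also have "\<dots> \<le> \<beta>^n * B" by (rule mult_left_mono) (use a in auto)
  finally show ?thesis by (simp add: mult.commute)
qed

lemma ser_summable:
  assumes "(\<And>s s'. 0 \<le> P s s')" "(\<And>s. (\<Sum>s'\<in>UNIV. P s s') = 1)" "\<And>h'. \<bar>f h'\<bar> \<le> B"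
    "0 \<le> \<beta>" "\<beta> < 1"
  shows "summable (\<lambda>n. \<beta>^n * Exh P n h f)"
proof (rule summable_comparison_test')
  show "summable (\<lambda>n. B * \<beta>^n)" using assms by (simp add: summable_geometric)
  fix n show "norm (\<beta>^n * Exh P n h f) \<le> B * \<beta>^n"
    using Exh_abs[where P=P and f=f and B=B and n=n and h=h] assms abs_geo_bound
    by (metis real_norm_def)
qed

lemma ser_bound:
  assumes "(\<And>s s'. 0 \<le> P s s')" "(\<And>s. (\<Sum>s'\<in>UNIV. P s s') = 1)" "\<And>h'. \<bar>f h'\<bar> \<le> B"
    "0 \<le> \<beta>" "\<beta> < 1"
  shows "\<bar>\<Sum>n. \<beta>^n * Exh P n h f\<bar> \<le> B / (1 - \<beta>)"
proof -
  have s1: "summable (\<lambda>n. B * \<beta>^n)" using assms by (simp add: summable_geometric)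
  have s2: "summable (\<lambda>n. - B * \<beta>^n)" using summable_minus[OF s1] by simp
  have bd: "\<bar>\<beta>^n * Exh P n h f\<bar> \<le> B * \<beta>^n" for n
    using Exh_abs[where P=P and f=f and B=B and n=n and h=h] assms abs_geo_bound
    by (metis real_norm_def)
  have sm: "summable (\<lambda>n. \<beta>^n * Exh P n h f)" by (rule ser_summable[OF assms])
  have "(\<Sum>n. \<beta>^n * Exh P n h f) \<le> (\<Sum>n. B * \<beta>^n)"
    by (rule suminf_le[OF _ sm s1]) (use bd abs_le_D1 in blast)
  moreover have "(\<Sum>n. - B * \<beta>^n) \<le> (\<Sum>n. \<beta>^n * Exh P n h f)"
    by (rule suminf_le[OF _ s2 sm]) (use bd in \<open>metis abs_le_D2 minus_le_iff mult_minus_left\<close>)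
  moreover have "(\<Sum>n. B * \<beta>^n) = B / (1 - \<beta>)" using assms by (simp add: suminf_mult suminf_geometric divide_simps)
  moreover have "(\<Sum>n. - B * \<beta>^n) = - B / (1 - \<beta>)"
    using assms suminf_mult[of "\<lambda>n. \<beta>^n" "-B"] summable_geometric[of \<beta>] suminf_geometric[of \<beta>] by simp
  ultimately show ?thesis by (simp add: abs_le_iff)
qed

lemma ser_rec:
  assumes P: "(\<And>s s'. 0 \<le> P s s')" "(\<And>s. (\<Sum>s'\<in>UNIV. P s s') = 1)" and b: "\<And>h'. \<bar>f h'\<bar> \<le> B"
    and bt: "0 \<le> \<beta>" "\<beta> < 1"
  shows "(\<Sum>n. \<beta>^n * Exh P n h f) = f h + \<beta> * (\<Sum>s'\<in>UNIV. P (hd h) s' * (\<Sum>n. \<beta>^n * Exh P n (s'#h) f))"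
proof -
  note sm = ser_summable[OF P b bt]
  have "(\<Sum>n. \<beta>^n * Exh P n h f) = f h + (\<Sum>n. \<beta>^(Suc n) * Exh P (Suc n) h f)"
    using suminf_split_head[OF sm[where h=h]] by simp
  also have "(\<Sum>n. \<beta>^(Suc n) * Exh P (Suc n) h f) = (\<Sum>n. \<Sum>s'\<in>UNIV. \<beta> * (P (hd h) s' * (\<beta>^n * Exh P n (s'#h) f)))"
    by (simp add: Exh_Suc_bot sum_distrib_left mult_ac)
  also have "\<dots> = (\<Sum>s'\<in>UNIV. \<Sum>n. \<beta> * (P (hd h) s' * (\<beta>^n * Exh P n (s'#h) f)))"
    by (rule suminf_sum) (intro summable_mult sm)
  also have "\<dots> = (\<Sum>s'\<in>UNIV. \<beta> * (P (hd h) s' * (\<Sum>n. \<beta>^n * Exh P n (s'#h) f)))"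
    by (intro sum.cong refl) (simp add: suminf_mult sm summable_mult)
  finally show ?thesis by (simp add: sum_distrib_left)
qed



lemma ytozero:
  fixes y m :: "nat \<Rightarrow> real"
  assumes b: "0 \<le> \<beta>" "\<beta> < 1" and y0: "\<And>n. 0 \<le> y n" "y 0 = 0"
    and rec: "\<And>n. y (Suc n) = \<beta> * (y n + m n)" and m0: "\<And>n. 0 \<le> m n" and sm: "summable m"
  shows "y \<longlonglongrightarrow> 0"
proof -
  have bd: "(\<Sum>k\<le>n. y k) \<le> \<beta> * suminf m / (1 - \<beta>)" for n
  proof -
    have "(\<Sum>k\<le>n. y k) = (\<Sum>k<Suc n. y k)" by (simp add: lessThan_Suc_atMost)
    also have "\<dots> = \<beta> * ((\<Sum>k<n. y k) + (\<Sum>k<n. m k))"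
      by (subst sum.lessThan_Suc_shift) (simp add: y0 rec sum.distrib sum_distrib_left[symmetric] del: sum.lessThan_Suc)
    finally have e: "(\<Sum>k\<le>n. y k) = \<beta> * ((\<Sum>k<n. y k) + (\<Sum>k<n. m k))" .
    have "(\<Sum>k<n. y k) \<le> (\<Sum>k\<le>n. y k)" by (rule sum_mono2) (auto simp: y0)
    moreover have "(\<Sum>k<n. m k) \<le> suminf m" by (rule sum_le_suminf[OF sm]) (auto simp: m0)
    ultimately have "(\<Sum>k\<le>n. y k) \<le> \<beta> * ((\<Sum>k\<le>n. y k) + suminf m)"
      using e b by (simp add: mult_left_mono)
    then have "(1 - \<beta>) * (\<Sum>k\<le>n. y k) \<le> \<beta> * suminf m" by (simp add: algebra_simps)
    then show ?thesis using b by (simp add: field_simps)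
  qed
  have "summable y" by (rule bounded_imp_summable[OF y0(1) bd])
  then show ?thesis by (rule summable_LIMSEQ_zero)
qed

lemma genh_fst: "map fst (genh a h) = tl h"
  by (induction a h rule: genh.induct) auto

lemma genh_len: "length (genh a h) = length h - 1"
  by (induction a h rule: genh.induct) auto

lemma genh_zip: "zip (tl h) (map snd (genh a h)) = genh a h"
  by (metis genh_fst zip_map_fst_snd)



locale L37 =
  fixes \<beta> :: real and P :: "'s::finite \<Rightarrow> 's \<Rightarrow> real" and \<zeta> :: "'x \<Rightarrow> 'a::finite \<Rightarrow> 's \<Rightarrow> 'x"
    and p r :: "'x \<Rightarrow> 'a \<Rightarrow> 's \<Rightarrow> real" and g :: "'i::finite \<Rightarrow> 'x \<Rightarrow> 'a \<Rightarrow> 's \<Rightarrow> real"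
    and gbar :: "'i \<Rightarrow> real" and F :: "real^'i \<Rightarrow> 'x \<Rightarrow> 's \<Rightarrow> real"
    and Br Bg Lc :: real and \<gamma> :: "real^'i" and x0 :: 'x and s0 :: 's
    and lam :: "('s \<times> 'a) list \<Rightarrow> 's \<Rightarrow> 'i \<Rightarrow> real"
  assumes beta0: "0 < \<beta>" and beta1: "\<beta> < 1"
    and Pnn: "\<And>s s'. 0 \<le> P s s'" and Psum: "\<And>s. (\<Sum>s'\<in>UNIV. P s s') = 1"
    and rB: "\<And>x u s. \<bar>r x u s\<bar> \<le> Br" and gB: "\<And>i x u s. \<bar>g i x u s\<bar> \<le> Bg"
    and Fup: "\<And>\<gamma>' x s. \<gamma>' \<in> orthant \<Longrightarrow> F \<gamma>' x s \<le> (1 + (\<Sum>i\<in>UNIV. \<gamma>'$i)) * Lc"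
    and bell: "\<And>\<gamma>' l x s. \<gamma>' \<in> orthant \<Longrightarrow> l \<in> orthant \<Longrightarrow> \<exists>u\<in>Aadm p x s. F \<gamma>' x s \<le>
        r x u s + (\<Sum>i\<in>UNIV. \<gamma>'$i * g i x u s + l$i * (g i x u s - gbar i))
               + \<beta> * (\<Sum>s'\<in>UNIV. P s s' * F (\<gamma>' + l) (\<zeta> x u s) s')"
    and gam: "\<gamma> \<in> orthant" and lamnn: "\<And>hh s i. 0 \<le> lam hh s i"
    and lamsum: "summable (\<lambda>t. \<Sum>e\<in>{e::'s list. length e = t}. \<Sum>acts\<in>{acts::'a list. length acts = t}.
        \<Sum>i\<in>UNIV. \<beta> ^ t * lam (zip (tl (e @ [s0])) acts) (hd (e @ [s0])) i * cp P e [s0])"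
begin

definition obj where "obj \<gamma>' l x s u = r x u s + (\<Sum>i\<in>UNIV. \<gamma>'$i * g i x u s + l$i * (g i x u s - gbar i))
               + \<beta> * (\<Sum>s'\<in>UNIV. P s s' * F (\<gamma>' + l) (\<zeta> x u s) s')"

definition ch where "ch \<gamma>' l x s = (SOME u. u \<in> Aadm p x s \<and> F \<gamma>' x s \<le> obj \<gamma>' l x s u)"

definition lv :: "('s \<times> 'a) list \<Rightarrow> 's \<Rightarrow> real^'i" where "lv hh s = (\<chi> i. lam hh s i)"

fun mk :: "'s list \<Rightarrow> 'x \<times> (real^'i) \<times> ('s \<times> 'a) list \<times> 'a" where
  "mk [] = undefined"
| "mk [s] = (x0, \<gamma>, [], ch \<gamma> (lv [] s) x0 s)"
| "mk (s' # s # h) = (let m = mk (s # h); x' = \<zeta> (fst m) (snd (snd (snd m))) s;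
      g' = fst (snd m) + lv (fst (snd (snd m))) s; hh' = (s, snd (snd (snd m))) # fst (snd (snd m))
      in (x', g', hh', ch g' (lv hh' s') x' s'))"

definition X where "X h = fst (mk h)"
definition G where "G h = fst (snd (mk h))"
definition H where "H h = fst (snd (snd (mk h)))"
definition pl where "pl h = snd (snd (snd (mk h)))"

lemma mk_single: "X [s] = x0" "G [s] = \<gamma>" "H [s] = []" "pl [s] = ch \<gamma> (lv [] s) x0 s"
  by (simp_all add: X_def G_def H_def pl_def)

lemma mk_cons:
  assumes "h \<noteq> []"
  shows "X (s'#h) = \<zeta> (X h) (pl h) (hd h)" "G (s'#h) = G h + lv (H h) (hd h)"
    "H (s'#h) = (hd h, pl h) # H h"
  using assms by (cases h; simp add: X_def G_def H_def pl_def Let_def)+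

lemma pl_ch: "h \<noteq> [] \<Longrightarrow> pl h = ch (G h) (lv (H h) (hd h)) (X h) (hd h)"
proof -
  assume "h \<noteq> []"
  then obtain s t where h: "h = s # t" by (cases h) auto
  show ?thesis
  proof (cases t)
    case Nil then show ?thesis using h by (simp add: mk_single)
  next
    case (Cons s2 t2)
    then show ?thesis using h by (simp add: X_def G_def H_def pl_def Let_def)
  qed
qed

lemma xp_eq: "h \<noteq> [] \<Longrightarrow> xp \<zeta> pl x0 h = X h"
proof (induction h)
  case Nil then show ?case by simp
next
  case (Cons s t)
  note IH = Cons.IH
  show ?case
  proof (cases t)
    case Nil then show ?thesis by (simp add: mk_single)
  next
    case (Cons s2 t2)
    have "xp \<zeta> pl x0 (s # t) = \<zeta> (xp \<zeta> pl x0 t) (pl t) (hd t)" using Cons by simp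
    also have "\<dots> = \<zeta> (X t) (pl t) (hd t)" using IH Cons by simp
    also have "\<dots> = X (s # t)" using mk_cons(1)[of t s] Cons by simp
    finally show ?thesis .
  qed
qed

lemma genh_eq: "h \<noteq> [] \<Longrightarrow> genh pl h = H h"
proof (induction h)
  case Nil then show ?case by simp
next
  case (Cons s t)
  note IH = Cons.IH
  show ?case
  proof (cases t)
    case Nil then show ?thesis by (simp add: mk_single)
  next
    case (Cons s2 t2)
    have "genh pl (s # t) = (hd t, pl t) # genh pl t" using Cons by simp
    also have "\<dots> = (hd t, pl t) # H t" using IH Cons by simp
    also have "\<dots> = H (s # t)" using mk_cons(3)[of t s] Cons by simp
    finally show ?thesis .
  qed
qed

lemma lv_orth: "lv hh s \<in> orthant"
  by (simp add: orthant_def lv_def lamnn)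

lemma G_ge: "h \<noteq> [] \<Longrightarrow> \<gamma>$i \<le> G h $ i"
proof (induction h)
  case Nil then show ?case by simp
next
  case (Cons s t)
  note IH = Cons.IH
  show ?case
  proof (cases t)
    case Nil then show ?thesis by (simp add: mk_single)
  next
    case (Cons s2 t2)
    have "G (s#t) $ i = G t $ i + lam (H t) (hd t) i" using mk_cons(2)[of t s] Cons by (simp add: lv_def)
    moreover have "\<gamma>$i \<le> G t $ i" using IH Cons by simp
    ultimately show ?thesis using lamnn[of "H t" "hd t" i] by simp
  qed
qed

lemma G_orth: assumes h: "h \<noteq> []" shows "G h \<in> orthant"
proof -
  have "0 \<le> G h $ i" for i
  proof -
    have "0 \<le> \<gamma>$i" using gam by (simp add: orthant_def)
    also have "\<dots> \<le> G h $ i" by (rule G_ge[OF h])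
    finally show ?thesis .
  qed
  then show ?thesis by (simp add: orthant_def)
qed

lemma key: assumes h: "h \<noteq> []"
  shows "pl h \<in> Aadm p (X h) (hd h) \<and>
   F (G h) (X h) (hd h) \<le> obj (G h) (lv (H h) (hd h)) (X h) (hd h) (pl h)"
proof -
  have ex: "\<exists>u. u \<in> Aadm p (X h) (hd h) \<and> F (G h) (X h) (hd h) \<le> obj (G h) (lv (H h) (hd h)) (X h) (hd h) u"
    using bell[OF G_orth[OF h] lv_orth[of "H h" "hd h"], where x="X h" and s="hd h"] unfolding obj_def by blast
  show ?thesis using someI_ex[OF ex] unfolding pl_ch[OF h] ch_def .
qed

end


context L37 begin

definition Cn where "Cn i h = cont \<beta> P \<zeta> pl x0 (g i) h"
definition Phi where "Phi h = F (G h) (X h) (hd h) - (\<Sum>i\<in>UNIV. (G h - \<gamma>)$i * Cn i h)"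
definition ell where "ell h = (let x = xp \<zeta> pl x0 h; u = pl h; s = hd h in
   r x u s + (\<Sum>i\<in>UNIV. \<gamma>$i * g i x u s) + (\<Sum>i\<in>UNIV. lam (genh pl h) s i * (cont \<beta> P \<zeta> pl x0 (g i) h - gbar i)))"

lemma gB': "\<bar>(\<lambda>h'. g i (xp \<zeta> pl x0 h') (pl h') (hd h')) h'\<bar> \<le> Bg"
  using gB by simp

lemma Cn_rec: assumes h: "h \<noteq> []"
  shows "Cn i h = g i (X h) (pl h) (hd h) + \<beta> * (\<Sum>s'\<in>UNIV. P (hd h) s' * Cn i (s'#h))"
  unfolding Cn_def cont_Exh
  using ser_rec[where P=P and f="\<lambda>h'. g i (xp \<zeta> pl x0 h') (pl h') (hd h')" and B=Bg and \<beta>=\<beta> and h=h,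
     OF Pnn Psum gB'] beta0 beta1 xp_eq[OF h] by simp

lemma Cn_bd: "\<bar>Cn i h\<bar> \<le> Bg / (1 - \<beta>)"
  unfolding Cn_def cont_Exh
  using ser_bound[where P=P and f="\<lambda>h'. g i (xp \<zeta> pl x0 h') (pl h') (hd h')" and B=Bg and \<beta>=\<beta> and h=h,
     OF Pnn Psum gB'] beta0 beta1 by simp

lemma step: assumes h: "h \<noteq> []"
  shows "Phi h \<le> ell h + \<beta> * (\<Sum>s'\<in>UNIV. P (hd h) s' * Phi (s'#h))"
proof -
  define x where "x = X h"
  define u where "u = pl h"
  define s where "s = hd h"
  define Gh where "Gh = G h"
  define L where "L = lv (H h) s"
  define D where "D i = (\<Sum>s'\<in>UNIV. P s s' * Cn i (s'#h))" for i
  define FF where "FF s' = F (Gh + L) (\<zeta> x u s) s'" for s'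
  have Xc: "X (s'#h) = \<zeta> x u s" for s' using mk_cons(1)[OF h] by (simp add: x_def u_def s_def)
  have Gc: "G (s'#h) = Gh + L" for s' using mk_cons(2)[OF h] by (simp add: Gh_def L_def s_def)
  have Cr: "Cn i h = g i x u s + \<beta> * D i" for i using Cn_rec[OF h] by (simp add: x_def u_def s_def D_def)
  have bel: "F Gh x s \<le> r x u s + (\<Sum>i\<in>UNIV. Gh$i * g i x u s + L$i * (g i x u s - gbar i)) + \<beta> * (\<Sum>s'\<in>UNIV. P s s' * FF s')"
    using key[OF h] by (simp add: obj_def x_def u_def s_def Gh_def L_def FF_def)
  have ell_eq: "ell h = r x u s + (\<Sum>i\<in>UNIV. \<gamma>$i * g i x u s) + (\<Sum>i\<in>UNIV. L$i * (Cn i h - gbar i))"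
    by (simp add: ell_def Let_def xp_eq[OF h] genh_eq[OF h] x_def u_def s_def L_def lv_def Cn_def)
  have Phic: "Phi (s'#h) = FF s' - (\<Sum>i\<in>UNIV. (Gh + L - \<gamma>)$i * Cn i (s'#h))" for s'
    by (simp add: Phi_def Xc Gc FF_def)
  have e1: "(\<Sum>s'\<in>UNIV. P s s' * Phi (s'#h)) = (\<Sum>s'\<in>UNIV. P s s' * FF s') - (\<Sum>i\<in>UNIV. (Gh + L - \<gamma>)$i * D i)"
  proof -
    have "(\<Sum>s'\<in>UNIV. P s s' * Phi (s'#h)) = (\<Sum>s'\<in>UNIV. P s s' * FF s' - (\<Sum>i\<in>UNIV. P s s' * ((Gh + L - \<gamma>)$i * Cn i (s'#h))))"
      by (simp only: Phic right_diff_distrib sum_distrib_left)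
    also have "\<dots> = (\<Sum>s'\<in>UNIV. P s s' * FF s') - (\<Sum>s'\<in>UNIV. \<Sum>i\<in>UNIV. P s s' * ((Gh + L - \<gamma>)$i * Cn i (s'#h)))"
      by (simp only: sum_subtractf)
    also have "(\<Sum>s'\<in>UNIV. \<Sum>i\<in>UNIV. P s s' * ((Gh + L - \<gamma>)$i * Cn i (s'#h))) = (\<Sum>i\<in>UNIV. \<Sum>s'\<in>UNIV. P s s' * ((Gh + L - \<gamma>)$i * Cn i (s'#h)))"
      by (rule sum.swap)
    also have "\<dots> = (\<Sum>i\<in>UNIV. (Gh + L - \<gamma>)$i * D i)"
      unfolding D_def by (simp only: sum_distrib_left mult.left_commute)
    finally show ?thesis .
  qed
  have Phih: "Phi h = F Gh x s - (\<Sum>i\<in>UNIV. (Gh - \<gamma>)$i * Cn i h)"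
    by (simp add: Phi_def Gh_def x_def s_def)
  have e2: "(\<Sum>i\<in>UNIV. Gh$i * g i x u s + L$i * (g i x u s - gbar i)) =
     (\<Sum>i\<in>UNIV. \<gamma>$i * g i x u s) + (\<Sum>i\<in>UNIV. L$i * (Cn i h - gbar i)) - \<beta> * (\<Sum>i\<in>UNIV. (Gh + L - \<gamma>)$i * D i)
      + (\<Sum>i\<in>UNIV. (Gh - \<gamma>)$i * Cn i h)"
    by (simp add: Cr sum_distrib_left sum.distrib[symmetric] sum_subtractf[symmetric] algebra_simps)
  show ?thesis
    using bel unfolding Phih ell_eq e1 s_def[symmetric] e2 by (simp add: algebra_simps)
qed

end


lemma Exh_nonneg: "(\<And>s s'. 0 \<le> P s s') \<Longrightarrow> (\<And>s. (\<Sum>s'\<in>UNIV. P s s') = 1) \<Longrightarrow>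
   (\<And>e. length e = n \<Longrightarrow> 0 \<le> f (e @ h)) \<Longrightarrow> 0 \<le> Exh P n h f"
  using Exh_mono[where f="\<lambda>_. 0" and g=f and P=P and n=n and h=h] Exh_const[where c=0 and P=P] by simp

context L37 begin

lemma Estep: "Exh P t [s0] Phi \<le> Exh P t [s0] ell + \<beta> * Exh P (Suc t) [s0] Phi"
proof -
  have "Exh P t [s0] Phi \<le> Exh P t [s0] (\<lambda>h. ell h + \<beta> * (\<Sum>s'\<in>UNIV. P (hd h) s' * Phi (s'#h)))"
    by (rule Exh_mono[OF Pnn]) (rule step, simp)
  also have "\<dots> = Exh P t [s0] ell + \<beta> * Exh P (Suc t) [s0] Phi"
    by (simp only: Exh_add Exh_cmult Exh_Suc_top)
  finally show ?thesis .
qed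

lemma Phi0: "Phi [s0] = F \<gamma> x0 s0"
  by (simp add: Phi_def mk_single)

lemma Ebound: "F \<gamma> x0 s0 \<le> (\<Sum>t<T. \<beta>^t * Exh P t [s0] ell) + \<beta>^T * Exh P T [s0] Phi"
proof (induction T)
  case 0 then show ?case by (simp add: Phi0)
next
  case (Suc T)
  have "\<beta>^T * Exh P T [s0] Phi \<le> \<beta>^T * (Exh P T [s0] ell + \<beta> * Exh P (Suc T) [s0] Phi)"
    by (rule mult_left_mono[OF Estep]) (use beta0 in simp)
  then show ?case using Suc.IH by (simp add: algebra_simps)
qed

definition m where "m t = \<beta>^t * Exh P t [s0] (\<lambda>h. \<Sum>i\<in>UNIV. lam (H h) (hd h) i)"
definition y where "y t = \<beta>^t * Exh P t [s0] (\<lambda>h. \<Sum>i\<in>UNIV. (G h - \<gamma>)$i)"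

lemma m_nn: "0 \<le> m t"
  unfolding m_def using beta0
  by (intro mult_nonneg_nonneg Exh_nonneg[OF Pnn Psum] sum_nonneg lamnn) auto

lemma Gam_nn: "h \<noteq> [] \<Longrightarrow> 0 \<le> (G h - \<gamma>)$i"
  using G_ge by simp

lemma y_nn: "0 \<le> y t"
  unfolding y_def using beta0
  by (intro mult_nonneg_nonneg Exh_nonneg[OF Pnn Psum] sum_nonneg Gam_nn) auto

lemma y0: "y 0 = 0"
  by (simp add: y_def mk_single)

lemma y_rec: "y (Suc t) = \<beta> * (y t + m t)"
proof -
  have "Exh P (Suc t) [s0] (\<lambda>h. \<Sum>i\<in>UNIV. (G h - \<gamma>)$i)
     = Exh P t [s0] (\<lambda>h. \<Sum>s'\<in>UNIV. P (hd h) s' * (\<Sum>i\<in>UNIV. (G (s'#h) - \<gamma>)$i))"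
    by (rule Exh_Suc_top)
  also have "\<dots> = Exh P t [s0] (\<lambda>h. (\<Sum>i\<in>UNIV. (G h - \<gamma>)$i) + (\<Sum>i\<in>UNIV. lam (H h) (hd h) i))"
  proof (rule Exh_cong)
    fix e :: "'s list" assume "length e = t"
    have ne: "e @ [s0] \<noteq> []" by simp
    have "(\<Sum>i\<in>UNIV. (G (s'#(e @ [s0])) - \<gamma>)$i) = (\<Sum>i\<in>UNIV. (G (e @ [s0]) - \<gamma>)$i) + (\<Sum>i\<in>UNIV. lam (H (e @ [s0])) (hd (e @ [s0])) i)" for s'
      by (simp add: mk_cons(2)[OF ne] lv_def sum.distrib[symmetric] algebra_simps)
    then show "(\<Sum>s'\<in>UNIV. P (hd (e @ [s0])) s' * (\<Sum>i\<in>UNIV. (G (s'#(e @ [s0])) - \<gamma>)$i))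
       = (\<Sum>i\<in>UNIV. (G (e @ [s0]) - \<gamma>)$i) + (\<Sum>i\<in>UNIV. lam (H (e @ [s0])) (hd (e @ [s0])) i)"
      by (simp add: sum_distrib_right[symmetric] Psum)
  qed
  also have "\<dots> = Exh P t [s0] (\<lambda>h. \<Sum>i\<in>UNIV. (G h - \<gamma>)$i) + Exh P t [s0] (\<lambda>h. \<Sum>i\<in>UNIV. lam (H h) (hd h) i)"
    by (rule Exh_add)
  finally show ?thesis by (simp add: y_def m_def algebra_simps)
qed

lemma m_le: "m t \<le> (\<Sum>e\<in>{e::'s list. length e = t}. \<Sum>acts\<in>{acts::'a list. length acts = t}.
        \<Sum>i\<in>UNIV. \<beta> ^ t * lam (zip (tl (e @ [s0])) acts) (hd (e @ [s0])) i * cp P e [s0])"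
proof -
  have "m t = (\<Sum>e\<in>{e::'s list. length e = t}. \<Sum>i\<in>UNIV. \<beta> ^ t * lam (H (e @ [s0])) (hd (e @ [s0])) i * cp P e [s0])"
    by (simp add: m_def Exh_def sum_distrib_left sum_distrib_right mult_ac)
  also have "\<dots> \<le> (\<Sum>e\<in>{e::'s list. length e = t}. \<Sum>acts\<in>{acts::'a list. length acts = t}.
        \<Sum>i\<in>UNIV. \<beta> ^ t * lam (zip (tl (e @ [s0])) acts) (hd (e @ [s0])) i * cp P e [s0])"
  proof (rule sum_mono)
    fix e :: "'s list" assume "e \<in> {e. length e = t}"
    then have le: "length e = t" by simp
    define a0 where "a0 = map snd (H (e @ [s0]))"
    have ne: "e @ [s0] \<noteq> []" by simp
    have z: "zip (tl (e @ [s0])) a0 = H (e @ [s0])"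
      unfolding a0_def genh_eq[OF ne, symmetric] by (rule genh_zip)
    have la: "a0 \<in> {acts::'a list. length acts = t}"
      unfolding a0_def genh_eq[OF ne, symmetric] by (simp add: genh_len le)
    have fa: "finite {acts::'a list. length acts = t}" by (rule fin_len)
    have nn: "0 \<le> (\<Sum>i\<in>UNIV. \<beta> ^ t * lam (zip (tl (e @ [s0])) acts) (hd (e @ [s0])) i * cp P e [s0])" for acts
      using beta0 by (intro sum_nonneg mult_nonneg_nonneg lamnn cp_nonneg Pnn) auto
    show "(\<Sum>i\<in>UNIV. \<beta> ^ t * lam (H (e @ [s0])) (hd (e @ [s0])) i * cp P e [s0])
      \<le> (\<Sum>acts\<in>{acts::'a list. length acts = t}.
        \<Sum>i\<in>UNIV. \<beta> ^ t * lam (zip (tl (e @ [s0])) acts) (hd (e @ [s0])) i * cp P e [s0])"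
      using member_le_sum[OF la, where f="\<lambda>acts. \<Sum>i\<in>UNIV. \<beta> ^ t * lam (zip (tl (e @ [s0])) acts) (hd (e @ [s0])) i * cp P e [s0]"]
        nn fa z by simp
  qed
  finally show ?thesis .
qed

lemma m_summable: "summable m"
  by (rule summable_comparison_test'[OF lamsum]) (use m_le m_nn in simp)

lemma y_lim: "y \<longlonglongrightarrow> 0"
  by (rule ytozero[OF _ beta1 y_nn y0 y_rec m_nn m_summable]) (use beta0 in simp)

end


context L37 begin

lemma Bg_nn: "0 \<le> Bg" using gB[of undefined undefined undefined undefined] by linarith

lemma Phi_bd: assumes h: "h \<noteq> []"
  shows "Phi h \<le> (1 + (\<Sum>i\<in>UNIV. \<gamma>$i)) * Lc + (\<bar>Lc\<bar> + Bg / (1 - \<beta>)) * (\<Sum>i\<in>UNIV. (G h - \<gamma>)$i)"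
proof -
  let ?S = "\<Sum>i\<in>UNIV. (G h - \<gamma>)$i"
  have S0: "0 \<le> ?S" by (intro sum_nonneg Gam_nn h)
  have "F (G h) (X h) (hd h) \<le> (1 + (\<Sum>i\<in>UNIV. G h $ i)) * Lc" by (rule Fup[OF G_orth[OF h]])
  also have "(\<Sum>i\<in>UNIV. G h $ i) = (\<Sum>i\<in>UNIV. \<gamma>$i) + ?S"
    by (simp add: sum.distrib[symmetric])
  finally have f1: "F (G h) (X h) (hd h) \<le> (1 + (\<Sum>i\<in>UNIV. \<gamma>$i)) * Lc + ?S * Lc" by (simp add: algebra_simps)
  have "?S * Lc \<le> ?S * \<bar>Lc\<bar>" by (rule mult_left_mono[OF _ S0]) simp
  moreover have "- (\<Sum>i\<in>UNIV. (G h - \<gamma>)$i * Cn i h) \<le> (\<Sum>i\<in>UNIV. (G h - \<gamma>)$i * (Bg / (1 - \<beta>)))"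
  proof -
    have "- (\<Sum>i\<in>UNIV. (G h - \<gamma>)$i * Cn i h) = (\<Sum>i\<in>UNIV. (G h - \<gamma>)$i * (- Cn i h))"
      by (simp add: sum_negf[symmetric])
    also have "\<dots> \<le> (\<Sum>i\<in>UNIV. (G h - \<gamma>)$i * (Bg / (1 - \<beta>)))"
      by (intro sum_mono mult_left_mono Gam_nn h) (use Cn_bd in \<open>metis abs_le_D2\<close>)
    finally show ?thesis .
  qed
  moreover have c: "(\<Sum>i\<in>UNIV. (G h - \<gamma>)$i * (Bg / (1 - \<beta>))) = ?S * (Bg / (1 - \<beta>))"
    by (simp only: sum_distrib_right)
  moreover have d: "(\<bar>Lc\<bar> + Bg / (1 - \<beta>)) * ?S = ?S * \<bar>Lc\<bar> + ?S * (Bg / (1 - \<beta>))"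
    by (simp only: distrib_right mult.commute)
  ultimately show ?thesis using f1 unfolding Phi_def by linarith
qed

lemma rem_bd: "\<beta>^T * Exh P T [s0] Phi \<le> \<beta>^T * ((1 + (\<Sum>i\<in>UNIV. \<gamma>$i)) * Lc) + (\<bar>Lc\<bar> + Bg / (1 - \<beta>)) * y T"
proof -
  let ?C0 = "(1 + (\<Sum>i\<in>UNIV. \<gamma>$i)) * Lc" and ?C1 = "\<bar>Lc\<bar> + Bg / (1 - \<beta>)"
  have "Exh P T [s0] Phi \<le> Exh P T [s0] (\<lambda>h. ?C0 + ?C1 * (\<Sum>i\<in>UNIV. (G h - \<gamma>)$i))"
    by (rule Exh_mono[OF Pnn]) (rule Phi_bd, simp)
  also have "\<dots> = ?C0 + ?C1 * Exh P T [s0] (\<lambda>h. \<Sum>i\<in>UNIV. (G h - \<gamma>)$i)"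
    by (simp only: Exh_add Exh_cmult Exh_const[OF Psum])
  finally have "\<beta>^T * Exh P T [s0] Phi \<le> \<beta>^T * (?C0 + ?C1 * Exh P T [s0] (\<lambda>h. \<Sum>i\<in>UNIV. (G h - \<gamma>)$i))"
    by (rule mult_left_mono) (use beta0 in simp)
  then show ?thesis by (simp add: y_def algebra_simps)
qed

lemma ell_bd: assumes h: "h \<noteq> []"
  shows "\<bar>ell h\<bar> \<le> (Br + (\<Sum>i\<in>UNIV. \<bar>\<gamma>$i\<bar>) * Bg) + (Bg / (1 - \<beta>) + (\<Sum>i\<in>UNIV. \<bar>gbar i\<bar>)) * (\<Sum>i\<in>UNIV. lam (H h) (hd h) i)"
proof -
  define x where "x = X h"
  define u where "u = pl h"
  define s where "s = hd h"
  let ?A1 = "Bg / (1 - \<beta>) + (\<Sum>i\<in>UNIV. \<bar>gbar i\<bar>)"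
  have e: "ell h = r x u s + (\<Sum>i\<in>UNIV. \<gamma>$i * g i x u s) + (\<Sum>i\<in>UNIV. lam (H h) s i * (Cn i h - gbar i))"
    by (simp add: ell_def Let_def xp_eq[OF h] genh_eq[OF h] x_def u_def s_def Cn_def)
  have t1: "\<bar>r x u s\<bar> \<le> Br" by (rule rB)
  have "\<bar>\<Sum>i\<in>UNIV. \<gamma>$i * g i x u s\<bar> \<le> (\<Sum>i\<in>UNIV. \<bar>\<gamma>$i * g i x u s\<bar>)" by (rule sum_abs)
  also have "\<dots> \<le> (\<Sum>i\<in>UNIV. \<bar>\<gamma>$i\<bar> * Bg)"
    by (intro sum_mono) (simp add: abs_mult mult_left_mono gB)
  finally have t2: "\<bar>\<Sum>i\<in>UNIV. \<gamma>$i * g i x u s\<bar> \<le> (\<Sum>i\<in>UNIV. \<bar>\<gamma>$i\<bar>) * Bg" by (simp add: sum_distrib_right)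
  have "\<bar>\<Sum>i\<in>UNIV. lam (H h) s i * (Cn i h - gbar i)\<bar> \<le> (\<Sum>i\<in>UNIV. \<bar>lam (H h) s i * (Cn i h - gbar i)\<bar>)" by (rule sum_abs)
  also have "\<dots> \<le> (\<Sum>i\<in>UNIV. lam (H h) s i * ?A1)"
  proof (intro sum_mono)
    fix i :: 'i
    have gi: "\<bar>gbar i\<bar> \<le> (\<Sum>i\<in>UNIV. \<bar>gbar i\<bar>)"
      by (rule member_le_sum) auto
    have "\<bar>Cn i h - gbar i\<bar> \<le> ?A1" using Cn_bd[of i h] gi by linarith
    then show "\<bar>lam (H h) s i * (Cn i h - gbar i)\<bar> \<le> lam (H h) s i * ?A1"
      by (simp add: abs_mult lamnn mult_left_mono)
  qed
  also have "\<dots> = ?A1 * (\<Sum>i\<in>UNIV. lam (H h) s i)"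
    by (simp only: sum_distrib_left mult.commute)
  finally have t3: "\<bar>\<Sum>i\<in>UNIV. lam (H h) s i * (Cn i h - gbar i)\<bar> \<le> ?A1 * (\<Sum>i\<in>UNIV. lam (H h) s i)" .
  show ?thesis unfolding e using t1 t2 t3 by (simp add: s_def)
qed

lemma ell_summable: "summable (\<lambda>t. \<beta>^t * Exh P t [s0] ell)"
proof -
  define A0 where "A0 = Br + (\<Sum>i\<in>UNIV. \<bar>\<gamma>$i\<bar>) * Bg"
  define A1 where "A1 = Bg / (1 - \<beta>) + (\<Sum>i\<in>UNIV. \<bar>gbar i\<bar>)"
  let ?L = "\<lambda>h. \<Sum>i\<in>UNIV. lam (H h) (hd h) i"
  have A1: "0 \<le> A1" unfolding A1_def using Bg_nn beta1 by (intro add_nonneg_nonneg sum_nonneg) auto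
  have bd: "\<bar>\<beta>^t * Exh P t [s0] ell\<bar> \<le> A0 * \<beta>^t + A1 * m t" for t
  proof -
    have up: "Exh P t [s0] ell \<le> Exh P t [s0] (\<lambda>h. A0 + A1 * ?L h)"
    proof (rule Exh_mono[OF Pnn])
      fix e :: "'s list"
      have "\<bar>ell (e @ [s0])\<bar> \<le> A0 + A1 * ?L (e @ [s0])" unfolding A0_def A1_def by (rule ell_bd) simp
      then show "ell (e @ [s0]) \<le> A0 + A1 * ?L (e @ [s0])" by linarith
    qed
    have lo: "Exh P t [s0] (\<lambda>h. (-1) * (A0 + A1 * ?L h)) \<le> Exh P t [s0] ell"
    proof (rule Exh_mono[OF Pnn])
      fix e :: "'s list"
      have "\<bar>ell (e @ [s0])\<bar> \<le> A0 + A1 * ?L (e @ [s0])" unfolding A0_def A1_def by (rule ell_bd) simp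
      then show "(-1) * (A0 + A1 * ?L (e @ [s0])) \<le> ell (e @ [s0])" by (simp add: abs_le_iff)
    qed
    have ev: "Exh P t [s0] (\<lambda>h. A0 + A1 * ?L h) = A0 + A1 * Exh P t [s0] ?L"
      by (simp only: Exh_add Exh_cmult Exh_const[OF Psum])
    have ev2: "Exh P t [s0] (\<lambda>h. (-1) * (A0 + A1 * ?L h)) = - (A0 + A1 * Exh P t [s0] ?L)"
      by (simp only: Exh_cmult ev) simp
    have "\<bar>Exh P t [s0] ell\<bar> \<le> A0 + A1 * Exh P t [s0] ?L" using up lo ev ev2 by linarith
    then have "\<bar>\<beta>^t * Exh P t [s0] ell\<bar> \<le> (A0 + A1 * Exh P t [s0] ?L) * \<beta>^t"
      by (rule abs_geo_bound) (use beta0 in simp)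
    then show ?thesis by (simp add: m_def algebra_simps)
  qed
  show ?thesis
  proof (rule summable_comparison_test')
    show "summable (\<lambda>t. A0 * \<beta>^t + A1 * m t)"
      using beta0 beta1 by (intro summable_add summable_mult m_summable summable_geometric) auto
    fix t show "norm (\<beta>^t * Exh P t [s0] ell) \<le> A0 * \<beta>^t + A1 * m t" using bd by simp
  qed
qed

lemma lagr_eq: "lagr \<beta> P \<zeta> r g gbar pl lam \<gamma> x0 s0 = (\<Sum>t. \<beta>^t * Exh P t [s0] ell)"
  by (simp add: lagr_def Exh_def ell_def Let_def)

lemma pl_Ainf: "pl \<in> Ainf p \<zeta> x0"
  unfolding Ainf_def using key xp_eq by auto

lemma F_le_lagr: "F \<gamma> x0 s0 \<le> lagr \<beta> P \<zeta> r g gbar pl lam \<gamma> x0 s0"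
proof -
  let ?C0 = "(1 + (\<Sum>i\<in>UNIV. \<gamma>$i)) * Lc" and ?C1 = "\<bar>Lc\<bar> + Bg / (1 - \<beta>)"
  let ?S = "\<lambda>T. \<Sum>t<T. \<beta>^t * Exh P t [s0] ell"
  have S: "?S \<longlonglongrightarrow> lagr \<beta> P \<zeta> r g gbar pl lam \<gamma> x0 s0"
    unfolding lagr_eq using ell_summable by (simp add: summable_LIMSEQ)
  have b: "(\<lambda>T. \<beta>^T) \<longlonglongrightarrow> 0" using beta0 beta1 by (intro LIMSEQ_power_zero) auto
  have "(\<lambda>T. ?S T + (\<beta>^T * ?C0 + ?C1 * y T)) \<longlonglongrightarrow> lagr \<beta> P \<zeta> r g gbar pl lam \<gamma> x0 s0 + (0 * ?C0 + ?C1 * 0)"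
    by (intro tendsto_intros S b y_lim)
  then have lim: "(\<lambda>T. ?S T + (\<beta>^T * ?C0 + ?C1 * y T)) \<longlonglongrightarrow> lagr \<beta> P \<zeta> r g gbar pl lam \<gamma> x0 s0" by simp
  show ?thesis
  proof (rule LIMSEQ_le_const[OF lim], intro exI allI impI)
    fix T :: nat
    show "F \<gamma> x0 s0 \<le> ?S T + (\<beta>^T * ?C0 + ?C1 * y T)"
      using Ebound[of T] rem_bd[of T] by simp
  qed
qed

end

theorem lemma3p7:
  fixes \<beta> :: real
    and P :: "'s::finite \<Rightarrow> 's \<Rightarrow> real"
    and \<zeta> :: "'x::countable \<Rightarrow> 'a::finite \<Rightarrow> 's \<Rightarrow> 'x"
    and p r :: "'x \<Rightarrow> 'a \<Rightarrow> 's \<Rightarrow> real"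
    and g :: "'i::finite \<Rightarrow> 'x \<Rightarrow> 'a \<Rightarrow> 's \<Rightarrow> real"
    and gbar :: "'i \<Rightarrow> real"
    and F :: "real^'i \<Rightarrow> 'x \<Rightarrow> 's \<Rightarrow> real"
  assumes beta: "0 < \<beta>" "\<beta> < 1"
    and P_pos: "\<forall>s s'. 0 < P s s'"
    and P_sum: "\<forall>s. (\<Sum>s'\<in>UNIV. P s s') = 1"
    and r_bdd: "bdd_above (range (\<lambda>z. \<bar>r (fst z) (fst (snd z)) (snd (snd z))\<bar>))"
    and g_bdd: "\<forall>i. bdd_above (range (\<lambda>z. \<bar>g i (fst z) (fst (snd z)) (snd (snd z))\<bar>))"
    and feas: "\<forall>x0 s0. \<exists>a. feasible \<beta> P \<zeta> p g gbar a x0 s0"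
    and FN: "inN \<beta> P \<zeta> p r g gbar F"
    and fixpt: "\<forall>\<gamma>\<in>orthant. \<forall>x s. bellman \<beta> P \<zeta> p r g gbar F \<gamma> x s = ereal (F \<gamma> x s)"
  shows "\<forall>\<gamma>\<in>orthant. \<forall>x s. ereal (F \<gamma> x s) \<le> Dval \<beta> P \<zeta> p r g gbar \<gamma> x s"
proof (intro ballI allI)
  fix \<gamma> :: "real^'i" and x :: 'x and s :: 's
  assume gam: "\<gamma> \<in> orthant"
  have rB: "\<bar>r x u s\<bar> \<le> supn r" for x u s
    unfolding supn_def using cSUP_upper[OF UNIV_I r_bdd, of "(x, u, s)"] by simp
  have gB1: "\<bar>g i x u s\<bar> \<le> supn (g i)" for i x u s
    unfolding supn_def using cSUP_upper[OF UNIV_I g_bdd[rule_format, of i], of "(x, u, s)"] by simp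
  have gB: "\<bar>g i x u s\<bar> \<le> (\<Sum>j\<in>UNIV. supn (g j))" for i x u s
  proof -
    have "supn (g i) \<le> (\<Sum>j\<in>UNIV. supn (g j))"
    proof (rule member_le_sum)
      show "0 \<le> supn (g j)" for j
        using gB1[of j undefined undefined undefined] abs_ge_zero[of "g j undefined undefined undefined"] by linarith
    qed auto
    then show ?thesis using gB1[of i x u s] by linarith
  qed
  have Fup: "F \<gamma>' x s \<le> (1 + (\<Sum>i\<in>UNIV. \<gamma>'$i)) * Lconst \<beta> r g" if "\<gamma>' \<in> orthant" for \<gamma>' x s
    using FN that unfolding inN_def by blast
  have bell: "\<exists>u\<in>Aadm p x s. F \<gamma>' x s \<le>
        r x u s + (\<Sum>i\<in>UNIV. \<gamma>'$i * g i x u s + l$i * (g i x u s - gbar i))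
               + \<beta> * (\<Sum>s'\<in>UNIV. P s s' * F (\<gamma>' + l) (\<zeta> x u s) s')"
    if g': "\<gamma>' \<in> orthant" and l: "l \<in> orthant" for \<gamma>' l x s
  proof -
    define f where "f u = r x u s + (\<Sum>i\<in>UNIV. \<gamma>'$i * g i x u s + l$i * (g i x u s - gbar i))
               + \<beta> * (\<Sum>s'\<in>UNIV. P s s' * F (\<gamma>' + l) (\<zeta> x u s) s')" for u
    define A where "A = Aadm p x s"
    have fin: "finite A" by simp
    have "ereal (F \<gamma>' x s) = bellman \<beta> P \<zeta> p r g gbar F \<gamma>' x s" using fixpt g' by simp
    also have "\<dots> \<le> (SUP u\<in>A. ereal (f u))"
      unfolding bellman_def A_def f_def by (rule INF_lower[OF l])
    finally have le: "ereal (F \<gamma>' x s) \<le> (SUP u\<in>A. ereal (f u))" .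
    have ne: "A \<noteq> {}"
    proof
      assume "A = {}"
      then show False using le by (simp add: bot_ereal_def)
    qed
    have "Max (f ` A) \<in> f ` A" using fin ne by (intro Max_in) auto
    then obtain u where u: "u \<in> A" "f u = Max (f ` A)" by auto
    have "(SUP v\<in>A. ereal (f v)) \<le> ereal (f u)"
    proof (rule SUP_least)
      fix v assume "v \<in> A"
      then have "f v \<le> Max (f ` A)" using fin by (intro Max_ge) auto
      then show "ereal (f v) \<le> ereal (f u)" using u by simp
    qed
    then have "ereal (F \<gamma>' x s) \<le> ereal (f u)" using le by (rule order_trans[rotated])
    then have "F \<gamma>' x s \<le> f u" by simp
    then show ?thesis using u(1) unfolding A_def f_def by blast
  qed
  show "ereal (F \<gamma> x s) \<le> Dval \<beta> P \<zeta> p r g gbar \<gamma> x s"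
    unfolding Dval_def
  proof (rule INF_greatest)
    fix lam :: "('s \<times> 'a) list \<Rightarrow> 's \<Rightarrow> 'i \<Rightarrow> real" assume lam: "lam \<in> LamSet \<beta> P s"
    interpret L: L37 \<beta> P \<zeta> p r g gbar F "supn r" "\<Sum>j\<in>UNIV. supn (g j)" "Lconst \<beta> r g" \<gamma> x s lam
    proof
      show "0 < \<beta>" "\<beta> < 1" by (fact beta)+
      show "0 \<le> P s s'" for s s' using P_pos less_imp_le by blast
      show "(\<Sum>s'\<in>UNIV. P s s') = 1" for s using P_sum by blast
      show "\<bar>r x u s\<bar> \<le> supn r" for x u s by (rule rB)
      show "\<bar>g i x u s\<bar> \<le> (\<Sum>j\<in>UNIV. supn (g j))" for i x u s by (rule gB)
      show "F \<gamma>' x s \<le> (1 + (\<Sum>i\<in>UNIV. \<gamma>'$i)) * Lconst \<beta> r g" if "\<gamma>' \<in> orthant" for \<gamma>' x s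
        using Fup that by blast
      show "\<exists>u\<in>Aadm p x s. F \<gamma>' x s \<le>
        r x u s + (\<Sum>i\<in>UNIV. \<gamma>'$i * g i x u s + l$i * (g i x u s - gbar i))
               + \<beta> * (\<Sum>s'\<in>UNIV. P s s' * F (\<gamma>' + l) (\<zeta> x u s) s')"
        if "\<gamma>' \<in> orthant" "l \<in> orthant" for \<gamma>' l x s using bell that by blast
      show "\<gamma> \<in> orthant" by (fact gam)
      show "0 \<le> lam hh s i" for hh s i using lam unfolding LamSet_def by blast
      show "summable (\<lambda>t. \<Sum>e\<in>{e::'s list. length e = t}. \<Sum>acts\<in>{acts::'a list. length acts = t}.
        \<Sum>i\<in>UNIV. \<beta> ^ t * lam (zip (tl (e @ [s])) acts) (hd (e @ [s])) i * cp P e [s])"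
        using lam unfolding LamSet_def by blast
    qed
    show "ereal (F \<gamma> x s) \<le> (SUP a\<in>Ainf p \<zeta> x. ereal (lagr \<beta> P \<zeta> r g gbar a lam \<gamma> x s))"
      by (rule SUP_upper2[OF L.pl_Ainf]) (use L.F_le_lagr in simp)
  qed
qed

end
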